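(* Let $\mathcal{B}$ and $\mathcal{A}_{i_1},\mathcal{A}_{i_1,i_2},\dots,\mathcal{A}_{i_1,\dots,i_m}$ (indices in $\{1,\dots,n\}$) be non-random Hermitian tensors of a common shape, and let $\beta_1,\dots,\beta_n$ be independent symmetric Bernoulli random variables, $\mathrm{Pr}(\beta_i=1)=\mathrm{Pr}(\beta_i=-1)=\frac12$. Then $$\mathrm{Pr}\Big(\Big\|\mathcal{B}+\sum_{j=1}^m\sum_{1\le i_1\neq i_2\neq\cdots\neq i_j\le n}\mathcal{A}_{i_1,\dots,i_j}\beta_{i_1}\cdots\beta_{i_j}\Big\|_{(k)}\ge\|\mathcal{B}\|_{(k)}\Big)\ge C_m,$$ where $C_m$ is a constant depending on $\mathcal{A}_{i_1},\mathcal{A}_{i_1,i_2},\dots,\mathcal{A}_{i_1,\dots,i_m}$ but independent of $\mathcal{B}$.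
   Context: Singular values of a tensor are those of its unfolded matrix (identify multi-indices with single indices by a fixed bijection); $\|\mathcal{T}\|_{(k)}$ is the Ky Fan $k$-norm, the sum of the $k$ largest singular values. The inner sum ranges over indices $i_1,\dots,i_j\in\{1,\dots,n\}$ that are pairwise distinct. *)

theory Defs
  imports "Jordan_Normal_Form.Schur_Decomposition" "HOL-Probability.Product_PMF"
begin

text \<open>A (complex) tensor of shape I_1 x ... x I_N x I_1 x ... x I_N, with dims = [I_1,...,I_N],
  is represented by its entry function: T xs ys is the entry at multi-index (xs, ys),
  where xs, ys are lists of length N with xs!l < I_l (0-based indices).\<close>
type_synonym ctensor = "nat list \<Rightarrow> nat list \<Rightarrow> complex"

definition multi_idx :: "nat list \<Rightarrow> nat list set" where
  "multi_idx dims = {xs. length xs = length dims \<and> (\<forall>l<length dims. xs ! l < dims ! l)}"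

definition herm_tensor :: "nat list \<Rightarrow> ctensor \<Rightarrow> bool" where
  "herm_tensor dims T \<longleftrightarrow>
     (\<forall>xs\<in>multi_idx dims. \<forall>ys\<in>multi_idx dims. T xs ys = cnj (T ys xs))"

text \<open>Fixed bijection {0..<prod_list dims} -> multi_idx dims (row-major / mixed radix).\<close>
fun mi_decode :: "nat list \<Rightarrow> nat \<Rightarrow> nat list" where
  "mi_decode [] r = []"
| "mi_decode (d # ds) r = (r div prod_list ds) # mi_decode ds (r mod prod_list ds)"

definition unfold_tensor :: "nat list \<Rightarrow> ctensor \<Rightarrow> complex mat" where
  "unfold_tensor dims T =
     Matrix.mat (prod_list dims) (prod_list dims) (\<lambda>(r, c). T (mi_decode dims r) (mi_decode dims c))"

definition singular_values :: "complex mat \<Rightarrow> real list" where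
  "singular_values M =
     rev (sorted_list_of_multiset
       (image_mset (\<lambda>z. sqrt (Re z)) (proots (char_poly (mat_adjoint M * M)))))"

definition ky_fan_mat :: "nat \<Rightarrow> complex mat \<Rightarrow> real" where
  "ky_fan_mat k M = sum_list (take k (singular_values M))"

definition ky_fan :: "nat \<Rightarrow> nat list \<Rightarrow> ctensor \<Rightarrow> real" where
  "ky_fan k dims T = ky_fan_mat k (unfold_tensor dims T)"

definition bernoulli_signs :: "nat \<Rightarrow> (nat \<Rightarrow> real) pmf" where
  "bernoulli_signs n = Pi_pmf {1..n} 0 (\<lambda>_. pmf_of_set {-1, 1})"

definition distinct_tuples :: "nat \<Rightarrow> nat \<Rightarrow> nat list set" where
  "distinct_tuples n j = {is. length is = j \<and> set is \<subseteq> {1..n} \<and> distinct is}"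

definition chaos :: "nat \<Rightarrow> nat \<Rightarrow> ctensor \<Rightarrow> (nat list \<Rightarrow> ctensor) \<Rightarrow> (nat \<Rightarrow> real) \<Rightarrow> ctensor" where
  "chaos n m B A \<beta> = (\<lambda>xs ys. B xs ys +
      (\<Sum>j\<in>{1..m}. \<Sum>is\<in>distinct_tuples n j.
          complex_of_real (prod_list (map \<beta> is)) * A is xs ys))"

end

theory Submission
  imports Defs
begin

definition adj :: "complex mat \<Rightarrow> complex mat" where
  "adj A = Matrix.mat (dim_col A) (dim_row A) (\<lambda>(i,j). cnj (A $$ (j,i)))"

lemma adj_dims[simp]: "dim_row (adj A) = dim_col A" "dim_col (adj A) = dim_row A"
  by (auto simp: adj_def)

lemma adj_index[simp]: "i < dim_col A \<Longrightarrow> j < dim_row A \<Longrightarrow> adj A $$ (i,j) = cnj (A $$ (j,i))"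
  by (auto simp: adj_def)

lemma adj_carrier[simp]: "A \<in> carrier_mat n m \<Longrightarrow> adj A \<in> carrier_mat m n"
  unfolding carrier_mat_def by simp

lemma mat_adjoint_adj: "mat_adjoint A = adj A"
  by (rule eq_matI) (auto simp: mat_adjoint_def adj_def mat_of_rows_def)

lemma adj_adj[simp]: "adj (adj A) = A"
  by (rule eq_matI) auto

lemma adj_mult: assumes "A \<in> carrier_mat n m" "B \<in> carrier_mat m p"
  shows "adj (A * B) = adj B * adj A"
proof (rule eq_matI)
  fix i j assume ij: "i < dim_row (adj B * adj A)" "j < dim_col (adj B * adj A)"
  have "i < p" "j < n" using ij assms by auto
  thus "adj (A * B) $$ (i, j) = (adj B * adj A) $$ (i, j)"
    using assms by (simp add: index_mult_mat scalar_prod_def cnj_sum mult.commute)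
qed (use assms in auto)

lemma adj_one[simp]: "adj (1\<^sub>m n) = 1\<^sub>m n"
  by (rule eq_matI) auto

lemma adj_zero[simp]: "adj (0\<^sub>m n m) = 0\<^sub>m m n"
  by (rule eq_matI) auto

lemma adj_four_block: assumes "A \<in> carrier_mat n1 m1" "B \<in> carrier_mat n1 m2" "C \<in> carrier_mat n2 m1" "D \<in> carrier_mat n2 m2"
  shows "adj (four_block_mat A B C D) = four_block_mat (adj A) (adj C) (adj B) (adj D)"
proof (rule eq_matI)
  fix i j assume ij: "i < dim_row (four_block_mat (adj A) (adj C) (adj B) (adj D))"
     "j < dim_col (four_block_mat (adj A) (adj C) (adj B) (adj D))"
  hence "i < m1 + m2" "j < n1 + n2" using assms by auto
  thus "adj (four_block_mat A B C D) $$ (i, j) = four_block_mat (adj A) (adj C) (adj B) (adj D) $$ (i, j)"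
    using assms by (simp add: four_block_mat_def)
qed (use assms in auto)

definition unitary :: "complex mat \<Rightarrow> nat \<Rightarrow> bool" where
  "unitary U n \<longleftrightarrow> U \<in> carrier_mat n n \<and> adj U * U = 1\<^sub>m n"

lemma unitary_right: assumes "unitary U n" shows "U * adj U = 1\<^sub>m n"
  using assms mat_mult_left_right_inverse[of "adj U" n U] unfolding unitary_def by auto

lemma unitary_mult: assumes "unitary U n" "unitary V n" shows "unitary (U * V) n"
proof -
  have c: "U \<in> carrier_mat n n" "V \<in> carrier_mat n n" using assms unfolding unitary_def by auto
  have "adj (U * V) * (U * V) = adj V * adj U * (U * V)"
    using c by (simp add: adj_mult)
  also have "\<dots> = adj V * (adj U * (U * V))"
    using c by (intro assoc_mult_mat[of _ n n _ n _ n]) auto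
  also have "adj U * (U * V) = (adj U * U) * V"
    using c by (intro assoc_mult_mat[symmetric, of _ n n _ n _ n]) auto
  also have "\<dots> = V" using assms c unfolding unitary_def by simp
  also have "adj V * V = 1\<^sub>m n" using assms c unfolding unitary_def by simp
  finally show ?thesis using c unfolding unitary_def by auto
qed

lemma unitary_adj: assumes "unitary U n" shows "unitary (adj U) n"
  using unitary_right[OF assms] assms unfolding unitary_def by auto


lemma assoc5: assumes "a \<in> carrier_mat n n" "b \<in> carrier_mat n n" "c \<in> carrier_mat n n"
  "d \<in> carrier_mat n n" "e \<in> carrier_mat n n"
  shows "(a * b) * c * (d * e) = a * (b * c * d) * e"
  using assms by (simp add: assoc_mult_mat[of _ n n _ n _ n])

lemma cscalar_smult: fixes v w :: "complex Matrix.vec"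
  assumes "dim_vec v = dim_vec w"
  shows "(a \<cdot>\<^sub>v v) \<bullet>c (b \<cdot>\<^sub>v w) = a * cnj b * (v \<bullet>c w)"
  using assms by (simp add: conjugate_smult_vec)

lemma cscalar_self_pos: fixes v :: "complex Matrix.vec"
  assumes "v \<in> carrier_vec n" "v \<noteq> 0\<^sub>v n"
  shows "Im (v \<bullet>c v) = 0" "Re (v \<bullet>c v) > 0"
proof -
  have "v \<bullet>c v > 0" using conjugate_square_greater_0_vec[OF assms(1)] assms(2) by simp
  thus "Im (v \<bullet>c v) = 0" "Re (v \<bullet>c v) > 0" by (auto simp: less_complex_def)
qed

definition ncoef :: "complex Matrix.vec \<Rightarrow> complex" where
  "ncoef v = complex_of_real (1 / sqrt (Re (v \<bullet>c v)))"

lemma ncoef: fixes v :: "complex Matrix.vec"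
  assumes "v \<in> carrier_vec n" "v \<noteq> 0\<^sub>v n"
  shows "(ncoef v \<cdot>\<^sub>v v) \<bullet>c (ncoef v \<cdot>\<^sub>v v) = 1" "ncoef v \<noteq> 0"
proof -
  note p = cscalar_self_pos[OF assms]
  obtain r where r: "r = Re (v \<bullet>c v)" by simp
  have e: "v \<bullet>c v = complex_of_real r" using p r by (simp add: complex_eq_iff)
  have rp: "r > 0" using p r by simp
  have "(ncoef v \<cdot>\<^sub>v v) \<bullet>c (ncoef v \<cdot>\<^sub>v v) = ncoef v * cnj (ncoef v) * (v \<bullet>c v)"
    by (rule cscalar_smult) simp
  also have "\<dots> = complex_of_real (1 / sqrt r) * complex_of_real (1 / sqrt r) * complex_of_real r"
    by (simp only: ncoef_def e Re_complex_of_real complex_cnj_complex_of_real)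
  also have "\<dots> = complex_of_real (1 / sqrt r * (1 / sqrt r) * r)"
    by (simp only: of_real_mult)
  also have "1 / sqrt r * (1 / sqrt r) * r = 1"
  proof -
    have "sqrt r * sqrt r = r" using rp by simp
    thus ?thesis using rp by (simp add: divide_simps)
  qed
  also have "complex_of_real 1 = 1" by simp
  finally show "(ncoef v \<cdot>\<^sub>v v) \<bullet>c (ncoef v \<cdot>\<^sub>v v) = 1" .
  show "ncoef v \<noteq> 0" using p by (simp add: ncoef_def)
qed

lemma ncoef_unit: fixes v :: "complex Matrix.vec" assumes "v \<bullet>c v = 1" shows "ncoef v = 1"
  using assms by (simp add: ncoef_def)

lemma unitary_schur:
  assumes A: "(A :: complex mat) \<in> carrier_mat n n"
      and c: "char_poly A = (\<Prod> (e :: complex) \<leftarrow> es. [:- e, 1:])"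
  shows "\<exists>U. unitary U n \<and> upper_triangular (adj U * A * U) \<and> diag_mat (adj U * A * U) = es"
  using assms
proof (induct es arbitrary: n A)
  case Nil
  with degree_monic_char_poly[of A n] have n: "n = 0" by auto
  show ?case
    by (rule exI[of _ "1\<^sub>m n"], insert Nil n, auto simp: diag_mat_def unitary_def upper_triangular_def)
next
  case (Cons e es n A)
  let ?n1 = "n - 1"
  from Cons have A: "A \<in> carrier_mat n n" and dim: "dim_row A = n" by auto
  let ?cp = "char_poly A"
  from Cons(3)
  have cp: "?cp = [: -e, 1 :] * (\<Prod>e \<leftarrow> es. [:- e, 1:])" by auto
  have mon: "monic (\<Prod>e\<leftarrow> es. [:- e, 1:])" by (rule monic_prod_list, auto)
  have deg: "degree ?cp = Suc (degree (\<Prod>e\<leftarrow> es. [:- e, 1:]))" unfolding cp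
    by (subst degree_mult_eq, insert mon, auto)
  with degree_monic_char_poly[OF A] have n: "n \<noteq> 0" by auto
  have e: "eigenvalue A e" 
    unfolding eigenvalue_root_char_poly[OF A] cp by simp
  define v0 where "v0 = find_eigenvector A e"
  from find_eigenvector[OF A e] have ev: "eigenvector A v0 e" unfolding v0_def .
  from this[unfolded eigenvector_def]
  have v0[simp]: "v0 \<in> carrier_vec n" and v00: "v0 \<noteq> 0\<^sub>v n" and ev0: "A *\<^sub>v v0 = e \<cdot>\<^sub>v v0" using A by auto
  define v where "v = ncoef v0 \<cdot>\<^sub>v v0"
  have v[simp]: "v \<in> carrier_vec n" unfolding v_def by simp
  have vv: "v \<bullet>c v = 1" unfolding v_def by (rule ncoef(1)[OF v0 v00])
  have v0': "v \<noteq> 0\<^sub>v n" using vv by auto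
  have eigen[simp]: "A *\<^sub>v v = e \<cdot>\<^sub>v v" unfolding v_def
    using A ev0 by (simp add: mult_mat_vec smult_smult_assoc mult.commute)
  interpret cof_vec_space n "TYPE(complex)" .
  define b where "b = basis_completion v"
  from basis_completion[OF v v0', folded b_def]
  have span_b: "span (set b) = carrier_vec n" and dist_b: "distinct b" 
    and indep: "\<not> lin_dep (set b)" and b: "set b \<subseteq> carrier_vec n" and hdb: "hd b = v" 
    and len_b: "length b = n" by auto
  from hdb len_b n obtain vs where bv: "b = v # vs" by (cases b, auto)
  define ws0 where "ws0 = gram_schmidt n b"
  from gram_schmidt_result[OF b dist_b indep refl, folded ws0_def]
  have ws0: "set ws0 \<subseteq> carrier_vec n" "corthogonal ws0" "length ws0 = n" 
    by (auto simp: len_b)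
  from gram_schmidt_hd[OF v, of vs, folded bv] have hdws0: "hd ws0 = v" unfolding ws0_def .
  define ws where "ws = map (\<lambda>w. ncoef w \<cdot>\<^sub>v w) ws0"
  have ws0i: "ws0 ! i \<in> carrier_vec n" "ws0 ! i \<noteq> 0\<^sub>v n" if "i < n" for i
  proof -
    show "ws0 ! i \<in> carrier_vec n" using ws0 that by auto
    have "ws0 ! i \<bullet>c ws0 ! i \<noteq> 0" using corthogonalD[OF ws0(2), of i i] ws0(3) that by auto
    thus "ws0 ! i \<noteq> 0\<^sub>v n" by auto
  qed
  have wsi: "ws ! i = ncoef (ws0 ! i) \<cdot>\<^sub>v ws0 ! i" if "i < n" for i
    unfolding ws_def using that ws0 by simp
  have ws_len: "length ws = n" unfolding ws_def using ws0 by simp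
  have ws_car: "set ws \<subseteq> carrier_vec n" unfolding ws_def using ws0 by auto
  have ws_corth: "corthogonal ws"
  proof (rule corthogonalI)
    fix i j assume i: "i < length ws" and j: "j < length ws"
    hence i': "i < n" and j': "j < n" using ws_len by auto
    have "ws ! i \<bullet>c ws ! j = ncoef (ws0 ! i) * cnj (ncoef (ws0 ! j)) * (ws0 ! i \<bullet>c ws0 ! j)"
      unfolding wsi[OF i'] wsi[OF j'] by (rule cscalar_smult) (use ws0i(1)[OF i'] ws0i(1)[OF j'] in auto)
    moreover have "ncoef (ws0 ! i) \<noteq> 0" "ncoef (ws0 ! j) \<noteq> 0"
      using ncoef(2) ws0i i' j' by auto
    moreover have "ws0 ! i \<bullet>c ws0 ! j = 0 \<longleftrightarrow> i \<noteq> j"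
      using corthogonalD[OF ws0(2)] i' j' ws0(3) by auto
    ultimately show "ws ! i \<bullet>c ws ! j = 0 \<longleftrightarrow> i \<noteq> j" by simp
  qed
  have ws_unit: "ws ! i \<bullet>c ws ! i = 1" if "i < n" for i
    unfolding wsi[OF that] by (rule ncoef(1)) (use ws0i that in auto)
  have hdws: "hd ws = v" 
  proof -
    have "ws0 \<noteq> []" using ws0(3) n by auto
    hence "hd ws = ncoef v \<cdot>\<^sub>v v" unfolding ws_def using hdws0 by (cases ws0) auto
    thus ?thesis using ncoef_unit[OF vv] by simp
  qed
  define W where "W = mat_of_cols n ws"
  define W' where "W' = corthogonal_inv W"
  define A' where "A' = W' * A * W"
  have orth_W: "corthogonal_mat W" using orthogonal_mat_of_cols ws_car ws_corth ws_len unfolding W_def by auto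
  have W: "W \<in> carrier_mat n n"
    using ws_car ws_len unfolding W_def using mat_of_cols_carrier(1)[of n ws] by auto
  have W': "W' \<in> carrier_mat n n" unfolding W'_def corthogonal_inv_def using W 
    by (auto simp: mat_of_rows_def)  
  from corthogonal_inv_result[OF orth_W] 
  have W'W: "inverts_mat W' W" unfolding W'_def .
  have W'adj: "W' = adj W"
  proof -
    have colsW: "cols W = ws" unfolding W_def using ws_car ws_len by simp
    have mapeq: "map vec_inv ws = map conjugate ws"
    proof (rule nth_equalityI)
      fix i assume "i < length (map vec_inv ws)"
      hence i: "i < n" using ws_len by auto
      show "map vec_inv ws ! i = map conjugate ws ! i"
        using i ws_len ws_unit[OF i] by (simp add: vec_inv_def)
    qed simp
    show ?thesis by (simp only: W'_def corthogonal_inv_def mat_adjoint_adj[symmetric] mat_adjoint_def colsW mapeq)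
  qed
  have unW: "unitary W n" using W'W W W' unfolding unitary_def inverts_mat_def W'adj by auto
  let ?f = "(\<lambda> i. if i = 0 then e else 0)"
  have col0: "col A' 0 = Matrix.vec n ?f"
    unfolding A'_def W'_def W_def
    using corthogonal_col_ev_0[OF A v v0' eigen n hdws ws_car ws_corth ws_len].
  have A': "A' \<in> carrier_mat n n" using W W' A unfolding A'_def by auto
  have A'A_wit: "similar_mat_wit A' A W' W"
  proof -
    have WW': "inverts_mat W W'" using mat_mult_left_right_inverse[OF W' W] W' W W'W
      unfolding inverts_mat_def by auto
    show ?thesis
      by (rule similar_mat_witI[of _ _ n], insert W W' A A' W'W WW', auto simp: A'_def
        inverts_mat_def)
  qed
  hence A'A: "similar_mat A' A" unfolding similar_mat_def by blast
  from A' n have "dim_row A' = 1 + ?n1" "dim_col A' = 1 + ?n1" by auto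
  obtain A1 A2 A0 A3 where splitA': "split_block A' 1 1 = (A1,A2,A0,A3)"
    by (cases "split_block A' 1 1", auto)
  from split_block[OF splitA' \<open>dim_row A' = 1 + ?n1\<close> \<open>dim_col A' = 1 + ?n1\<close>]
  have A2: "A2 \<in> carrier_mat 1 ?n1"
    and A3: "A3 \<in> carrier_mat ?n1 ?n1" 
    and A'block: "A' = four_block_mat A1 A2 A0 A3" by auto
  have A1id: "A1 = Matrix.mat 1 1 (\<lambda> _. e)"
    using splitA'[unfolded split_block_def Let_def] arg_cong[OF col0, of "\<lambda> v :: complex Matrix.vec. v $ 0"] A' n
    by (auto simp: col_def)
  have A1: "A1 \<in> carrier_mat 1 1" unfolding A1id by auto
  {
    fix i
    assume "i < ?n1"
    with arg_cong[OF col0, of "\<lambda> v :: complex Matrix.vec. v $ Suc i"] A'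
    have "A' $$ (Suc i, 0) = 0" by auto
  } note A'0 = this
  have A0id: "A0 = 0\<^sub>m ?n1 1"
    using splitA'[unfolded split_block_def Let_def] A'0 A' by auto
  from cp char_poly_similar[OF A'A]
  have cp: "char_poly A' = [: -e,1 :] * (\<Prod> e \<leftarrow> es. [:- e, 1:])" by simp
  also have "char_poly A' = char_poly A1 * char_poly A3" 
    unfolding A'block A0id
    by (rule char_poly_four_block_zeros_col[OF A1 A2 A3])
  also have "char_poly A1 = [: -e,1 :]"
    by (simp add: A1id char_poly_defs Determinant.det_def sign_def)
  finally have cp: "char_poly A3 = (\<Prod> e \<leftarrow> es. [:- e, 1:])"
    by (metis mult_cancel_left pCons_eq_0_iff zero_neq_one)
  from Cons(1)[OF A3 cp] obtain U' where unU': "unitary U' ?n1"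
    and ut: "upper_triangular (adj U' * A3 * U')" and diag: "diag_mat (adj U' * A3 * U') = es" by auto
  have U': "U' \<in> carrier_mat ?n1 ?n1" using unU' unfolding unitary_def by auto
  let ?U' = "four_block_mat (1\<^sub>m 1) (0\<^sub>m 1 ?n1) (0\<^sub>m ?n1 1) U'"
  have n1: "1 + ?n1 = n" using n by simp
  have U'c: "?U' \<in> carrier_mat n n" using U' n1 by (metis four_block_carrier_mat one_carrier_mat)
  have adjU': "adj ?U' = four_block_mat (1\<^sub>m 1) (0\<^sub>m 1 ?n1) (0\<^sub>m ?n1 1) (adj U')"
    by (subst adj_four_block[of _ 1 1 _ ?n1 _ ?n1]) (use U' in auto)
  have unU'': "unitary ?U' n"
  proof -
    have "adj ?U' * ?U' = four_block_mat (1\<^sub>m 1) (0\<^sub>m 1 ?n1) (0\<^sub>m ?n1 1) (adj U' * U')"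
      unfolding adjU' by (subst mult_four_block_mat[of _ 1 1 _ ?n1 _ ?n1 _ _ 1 _ ?n1]) (use U' in auto)
    also have "adj U' * U' = 1\<^sub>m ?n1" using unU' unfolding unitary_def by auto
    finally show ?thesis using U'c n1 unfolding unitary_def by auto
  qed
  define U where "U = W * ?U'"
  have unU: "unitary U n" unfolding U_def by (rule unitary_mult[OF unW unU''])
  have "adj U * A * U = adj ?U' * (adj W * A * W) * ?U'"
  proof -
    have "adj U = adj ?U' * adj W" unfolding U_def using W U'c by (simp add: adj_mult)
    thus ?thesis unfolding U_def using W U'c A
      by (simp add: assoc5[of _ n])
  qed
  also have "adj W * A * W = A'" unfolding A'_def W'adj ..
  also have "adj ?U' * A' * ?U' = four_block_mat A1 (A2 * U') (0\<^sub>m ?n1 1) (adj U' * A3 * U')"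
  proof -
    have "adj ?U' * A' = four_block_mat A1 A2 (0\<^sub>m ?n1 1) (adj U' * A3)"
    proof -
      have c: "adj U' * A3 \<in> carrier_mat ?n1 ?n1" using U' A3 by auto
      have z: "0\<^sub>m (n - Suc 0) (n - Suc 0) + adj U' * A3 = adj U' * A3" using left_add_zero_mat[OF c] by simp
      show ?thesis unfolding adjU' A'block A0id
      using A1 A2 A3 U'
      by (simp add: mult_four_block_mat[of _ 1 1 _ ?n1 _ ?n1 _ _ 1 _ ?n1] z)
    qed
    moreover have "four_block_mat A1 A2 (0\<^sub>m ?n1 1) (adj U' * A3) * ?U'
       = four_block_mat A1 (A2 * U') (0\<^sub>m ?n1 1) (adj U' * A3 * U')"
    proof -
      have c: "adj U' * A3 \<in> carrier_mat ?n1 ?n1" using U' A3 by auto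
      have "four_block_mat A1 A2 (0\<^sub>m ?n1 1) (adj U' * A3) * ?U' = 
        four_block_mat (A1 * 1\<^sub>m 1 + A2 * 0\<^sub>m ?n1 1) (A1 * 0\<^sub>m 1 ?n1 + A2 * U')
          (0\<^sub>m ?n1 1 * 1\<^sub>m 1 + (adj U' * A3) * 0\<^sub>m ?n1 1) (0\<^sub>m ?n1 1 * 0\<^sub>m 1 ?n1 + (adj U' * A3) * U')"
        by (rule mult_four_block_mat) (use A1 A2 c U' in auto)
      also have "A1 * 1\<^sub>m 1 + A2 * 0\<^sub>m ?n1 1 = A1" using A1 A2 by auto
      also have "A1 * 0\<^sub>m 1 ?n1 + A2 * U' = A2 * U'" using A1 A2 U' by auto
      also have "0\<^sub>m ?n1 1 * 1\<^sub>m 1 + (adj U' * A3) * 0\<^sub>m ?n1 1 = 0\<^sub>m ?n1 1"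
        by (simp only: left_mult_zero_mat[OF one_carrier_mat] right_mult_zero_mat[OF c] left_add_zero_mat[OF zero_carrier_mat])
      also have "0\<^sub>m ?n1 1 * 0\<^sub>m 1 ?n1 + (adj U' * A3) * U' = adj U' * A3 * U'" using c U' by auto
      finally show ?thesis .
    qed
    ultimately show ?thesis by simp
  qed
  finally have UAU: "adj U * A * U = four_block_mat A1 (A2 * U') (0\<^sub>m ?n1 1) (adj U' * A3 * U')" .
  have T': "adj U' * A3 * U' \<in> carrier_mat ?n1 ?n1" using U' A3 by auto
  have ut1: "upper_triangular A1" unfolding A1id by auto
  have "upper_triangular (adj U * A * U)" unfolding UAU
    by (rule upper_triangular_four_block[OF A1 T' ut1 ut])
  moreover have "diag_mat (adj U * A * U) = e # es"
    unfolding UAU diag_four_block_mat[OF A1 T'] diag by (simp add: A1id diag_mat_def)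
  ultimately show ?case using unU by blast
qed


definition diag_c :: "complex list \<Rightarrow> complex mat" where
  "diag_c es = Matrix.mat (length es) (length es) (\<lambda>(i,j). if i = j then es ! i else 0)"

lemma diag_c_carrier[simp]: "diag_c es \<in> carrier_mat (length es) (length es)"
  unfolding diag_c_def by simp

lemma diag_c_index[simp]: "i < length es \<Longrightarrow> j < length es \<Longrightarrow> diag_c es $$ (i,j) = (if i = j then es ! i else 0)"
  unfolding diag_c_def by simp

lemma diag_c_dims[simp]: "dim_row (diag_c es) = length es" "dim_col (diag_c es) = length es"
  unfolding diag_c_def by simp_all

lemma diag_c_mult: "length es = length fs \<Longrightarrow> diag_c es * diag_c fs = diag_c (map2 (*) es fs)"
proof (rule eq_matI)
  fix i j assume l: "length es = length fs" and i: "i < dim_row (diag_c (map2 (*) es fs))" and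
    j: "j < dim_col (diag_c (map2 (*) es fs))"
  hence i': "i < length es" and j': "j < length es" using l by auto
  have "(diag_c es * diag_c fs) $$ (i, j) = (\<Sum>k<length es. diag_c es $$ (i,k) * diag_c fs $$ (k,j))"
    using i' j' l by (simp add: index_mult_mat scalar_prod_def atLeast0LessThan)
  also have "\<dots> = (\<Sum>k<length es. if k = i then (if i = j then es ! i * fs ! i else 0) else 0)"
    using i' j' l by (intro sum.cong) auto
  also have "\<dots> = (if i = j then es ! i * fs ! i else 0)" using i' by simp
  finally show "(diag_c es * diag_c fs) $$ (i, j) = diag_c (map2 (*) es fs) $$ (i, j)"
    using i' j' l by simp
qed (auto)

lemma proots_linear_prod: "proots (\<Prod>(a::complex)\<leftarrow>xs. [:- a, 1:]) = mset xs"
proof (induct xs)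
  case (Cons a xs)
  have nz: "(\<Prod>(a::complex)\<leftarrow>xs. [:- a, 1:]) \<noteq> 0"
    by (auto simp: prod_list_zero_iff)
  have "proots (\<Prod>(a::complex)\<leftarrow>a # xs. [:- a, 1:]) = proots [:- a, 1:] + proots (\<Prod>(a::complex)\<leftarrow>xs. [:- a, 1:])"
    by (simp only: list.map prod_list.Cons, rule proots_mult[OF _ nz]) simp
  also have "proots [:- a, 1:] = {#a#}" using proots_linear_factor[of "- a"] by simp
  also have "proots (\<Prod>(a::complex)\<leftarrow>xs. [:- a, 1:]) = mset xs" by (rule Cons)
  finally have e: "proots (\<Prod>(a::complex)\<leftarrow>a # xs. [:- a, 1:]) = {#a#} + mset xs" .
  show ?case unfolding e by simp
qed simp

lemma prod_list_perm: "mset xs = mset ys \<Longrightarrow> prod_list (map (f :: 'a \<Rightarrow> 'b :: comm_monoid_mult) xs) = prod_list (map f ys)"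
proof -
  assume "mset xs = mset ys"
  hence "mset (map f xs) = mset (map f ys)" by simp
  hence "prod_mset (mset (map f xs)) = prod_mset (mset (map f ys))" by (rule arg_cong)
  thus ?thesis by (simp only: prod_mset_prod_list)
qed

lemma herm_decomp:
  assumes M: "M \<in> carrier_mat N N" and h: "adj M = M"
  shows "\<exists>U es. unitary U N \<and> length es = N \<and> (\<forall>i<N. Im (es ! i) = 0) \<and>
     sorted_wrt (\<ge>) (map cmod es) \<and> adj U * M * U = diag_c es"
proof -
  obtain as where cA: "char_poly M = (\<Prod>a\<leftarrow>as. [:- a, 1:])" and las: "length as = N"
    using char_poly_factorized[OF M] by blast
  define es where "es = sort_key (\<lambda>e. - cmod e) as"
  have mes: "mset es = mset as" unfolding es_def by simp
  have les: "length es = N" using mes las by (metis size_mset)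
  have cE: "char_poly M = (\<Prod>a\<leftarrow>es. [:- a, 1:])" unfolding cA by (rule prod_list_perm) (simp add: mes)
  from unitary_schur[OF M cE] obtain U where U: "unitary U N" and ut: "upper_triangular (adj U * M * U)"
    and dg: "diag_mat (adj U * M * U) = es" by blast
  define T where "T = adj U * M * U"
  have Uc: "U \<in> carrier_mat N N" using U unfolding unitary_def by auto
  have Tc: "T \<in> carrier_mat N N" unfolding T_def using Uc M by auto
  have adjT: "adj T = T" unfolding T_def using Uc M h
    by (simp add: adj_mult[of _ N N _ N] assoc_mult_mat[of _ N N _ N _ N])
  have Tij: "T $$ (i,j) = cnj (T $$ (j,i))" if "i < N" "j < N" for i j
  proof -
    have "T $$ (i,j) = adj T $$ (i,j)" using adjT by simp
    thus ?thesis using that Tc by simp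
  qed
  have Tii: "T $$ (i,i) = es ! i" if "i < N" for i
  proof -
    have "diag_mat T ! i = T $$ (i,i)" using that Tc by (simp add: diag_mat_def)
    thus ?thesis using dg[folded T_def] by simp
  qed
  have Tdiag: "T = diag_c es"
  proof (rule eq_matI)
    fix i j assume i: "i < dim_row (diag_c es)" and j: "j < dim_col (diag_c es)"
    hence i': "i < N" and j': "j < N" using les by auto
    show "T $$ (i, j) = diag_c es $$ (i, j)"
    proof (cases "i = j")
      case True thus ?thesis using Tii i' les by simp
    next
      case False
      have "T $$ (i,j) = 0"
      proof (cases "j < i")
        case True thus ?thesis using ut i' Tc unfolding T_def[symmetric] by auto
      next
        case False
        hence "i < j" using \<open>i \<noteq> j\<close> by simp
        hence "T $$ (j,i) = 0" using ut j' Tc unfolding T_def[symmetric] by auto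
        thus ?thesis using Tij[OF i' j'] by simp
      qed
      thus ?thesis using False i' j' les by simp
    qed
  qed (use Tc les in auto)
  have im: "\<forall>i<N. Im (es ! i) = 0"
  proof (intro allI impI)
    fix i assume i: "i < N"
    have "es ! i = cnj (es ! i)" using Tij[OF i i] Tii[OF i] by simp
    from arg_cong[OF this, of Im] show "Im (es ! i) = 0" by simp
  qed
  have "sorted (map (\<lambda>e. - cmod e) es)" unfolding es_def by simp
  hence "sorted_wrt (\<ge>) (map cmod es)" by (simp add: sorted_wrt_map sorted_map)
  thus ?thesis using U les im Tdiag unfolding T_def by blast
qed


lemma conj_back: assumes U: "unitary U N" and X: "X \<in> carrier_mat N N"
  shows "U * (adj U * X * U) * adj U = X"
proof -
  have Uc: "U \<in> carrier_mat N N" using U unfolding unitary_def by auto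
  have "U * (adj U * X * U) * adj U = (U * adj U) * X * (U * adj U)"
    using Uc X by (simp add: assoc5[of _ N])
  also have "\<dots> = X" using unitary_right[OF U] X by simp
  finally show ?thesis .
qed

lemma conj_mult: assumes U: "unitary U N" and X: "X \<in> carrier_mat N N" and Y: "Y \<in> carrier_mat N N"
  shows "adj U * (X * Y) * U = (adj U * X * U) * (adj U * Y * U)"
proof -
  have Uc: "U \<in> carrier_mat N N" using U unfolding unitary_def by auto
  have aU: "adj U \<in> carrier_mat N N" using Uc by simp
  have gen: "(a * b * c) * (d * e * f) = a * b * (c * d) * e * f"
    if "a \<in> carrier_mat N N" "b \<in> carrier_mat N N" "c \<in> carrier_mat N N"
       "d \<in> carrier_mat N N" "e \<in> carrier_mat N N" "f \<in> carrier_mat N N" for a b c d e f :: "complex mat"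
    using that by (simp add: assoc_mult_mat[of _ N N _ N _ N])
  have gen2: "a * b * (1\<^sub>m N) * e * f = a * (b * e) * f"
    if "a \<in> carrier_mat N N" "b \<in> carrier_mat N N" "e \<in> carrier_mat N N" "f \<in> carrier_mat N N" for a b e f :: "complex mat"
    using that by (simp add: assoc_mult_mat[of _ N N _ N _ N])
  show ?thesis
    unfolding gen[OF aU X Uc aU Y Uc] unitary_right[OF U] gen2[OF aU X Y Uc] ..
qed

lemma sv_decomp:
  assumes M: "M \<in> carrier_mat N N" and h: "adj M = M" and U: "unitary U N" and les: "length es = N"
   and im: "\<forall>i<N. Im (es!i) = 0" and srt: "sorted_wrt (\<ge>) (map cmod es)" and D: "adj U * M * U = diag_c es"
  shows "singular_values M = map cmod es"
proof -
  have Uc: "U \<in> carrier_mat N N" using U unfolding unitary_def by auto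
  have DD: "adj U * (M * M) * U = diag_c (map2 (*) es es)"
    unfolding conj_mult[OF U M M] D by (simp add: diag_c_mult)
  have MMc: "M * M \<in> carrier_mat N N" using M by auto
  have "similar_mat_wit (M * M) (diag_c (map2 (*) es es)) U (adj U)"
    unfolding similar_mat_wit_def Let_def
    using M MMc Uc les unitary_right[OF U] U conj_back[OF U MMc] DD unfolding unitary_def by auto
  hence "similar_mat (M * M) (diag_c (map2 (*) es es))" unfolding similar_mat_def by blast
  hence cp: "char_poly (M * M) = char_poly (diag_c (map2 (*) es es))" by (rule char_poly_similar)
  have ut: "upper_triangular (diag_c (map2 (*) es es))"
    by (rule upper_triangularI) auto
  have dg: "diag_mat (diag_c (map2 (*) es es)) = map2 (*) es es"
    by (rule nth_equalityI) (auto simp: diag_mat_def)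
  have cp2: "char_poly (M * M) = (\<Prod>a\<leftarrow>map2 (*) es es. [:- a, 1:])"
    unfolding cp char_poly_upper_triangular[OF diag_c_carrier ut] dg ..
  have mp: "map (\<lambda>z. sqrt (Re z)) (map2 (*) es es) = map cmod es"
  proof (rule nth_equalityI)
    fix i assume "i < length (map (\<lambda>z. sqrt (Re z)) (map2 (*) es es))"
    hence i: "i < N" using les by simp
    have "sqrt (Re (es ! i * es ! i)) = cmod (es ! i)"
      using im i by (simp add: cmod_eq_Re)
    thus "map (\<lambda>z. sqrt (Re z)) (map2 (*) es es) ! i = map cmod es ! i" using i les by simp
  qed simp
  have "singular_values M = rev (sort (map cmod es))"
    unfolding singular_values_def mat_adjoint_adj h cp2 proots_linear_prod
    by (simp only: mset_map[symmetric] mp sorted_list_of_multiset_mset)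
  also have "sort (map cmod es) = rev (map cmod es)"
    by (rule properties_for_sort) (use srt in \<open>simp_all add: sorted_wrt_rev\<close>)
  finally show ?thesis by simp
qed

lemma topk_bound:
  fixes xs :: "real list" and c :: "nat \<Rightarrow> real"
  assumes srt: "sorted_wrt (\<ge>) xs" and nn: "\<forall>x\<in>set xs. x \<ge> 0"
    and c01: "\<And>j. j < length xs \<Longrightarrow> 0 \<le> c j \<and> c j \<le> 1"
    and cs: "(\<Sum>j<length xs. c j) \<le> real k"
  shows "(\<Sum>j<length xs. xs ! j * c j) \<le> sum_list (take k xs)"
proof -
  let ?N = "length xs"
  have st: "sum_list (take k xs) = (\<Sum>j<min k ?N. xs ! j)"
    by (simp add: sum_list_sum_nth atLeast0LessThan min.commute)
  show ?thesis
  proof (cases "?N \<le> k")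
    case True
    hence "min k ?N = ?N" by simp
    hence st': "sum_list (take k xs) = (\<Sum>j<?N. xs ! j)" using st by simp
    have "(\<Sum>j<?N. xs ! j * c j) \<le> (\<Sum>j<?N. xs ! j)"
    proof (rule sum_mono)
      fix j assume "j \<in> {..<?N}"
      hence j: "j < ?N" by simp
      have "xs ! j \<ge> 0" using nn j by auto
      thus "xs ! j * c j \<le> xs ! j" using c01[OF j] by (simp add: mult_left_le)
    qed
    thus ?thesis using st' by simp
  next
    case False
    hence kN: "k < ?N" by simp
    define t where "t = xs ! k"
    have t0: "t \<ge> 0" using nn kN unfolding t_def by auto
    have ge: "xs ! j \<ge> t" if "j < k" for j
      using sorted_wrt_nth_less[OF srt that kN] unfolding t_def by simp
    have le: "xs ! j \<le> t" if "k < j" "j < ?N" for j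
      using sorted_wrt_nth_less[OF srt that] unfolding t_def by simp
    have le': "xs ! j \<le> t" if "k \<le> j" "j < ?N" for j
      using le[of j] that unfolding t_def by (cases "k = j") auto
    have split: "{..<?N} = {..<k} \<union> {k..<?N}" using kN by auto
    have split_sum: "(\<Sum>j<?N. f j) = (\<Sum>j<k. f j) + (\<Sum>j\<in>{k..<?N}. f j)" for f :: "nat \<Rightarrow> real"
      unfolding split by (rule sum.union_disjoint) auto
    have "(\<Sum>j<?N. xs ! j * c j) = (\<Sum>j<k. xs ! j * c j) + (\<Sum>j\<in>{k..<?N}. xs ! j * c j)"
      by (rule split_sum)
    also have "(\<Sum>j\<in>{k..<?N}. xs ! j * c j) \<le> (\<Sum>j\<in>{k..<?N}. t * c j)"
      by (rule sum_mono) (use le' c01 in \<open>auto intro: mult_right_mono\<close>)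
    also have "(\<Sum>j\<in>{k..<?N}. t * c j) = t * (\<Sum>j\<in>{k..<?N}. c j)" by (simp add: sum_distrib_left)
    also have "(\<Sum>j\<in>{k..<?N}. c j) \<le> real k - (\<Sum>j<k. c j)"
      using cs split_sum[of c] by simp
    also have "(\<Sum>j<k. xs ! j * c j) + t * (real k - (\<Sum>j<k. c j)) = (\<Sum>j<k. xs ! j * c j + t * (1 - c j))"
      by (simp add: sum.distrib sum_distrib_left sum_subtractf algebra_simps)
    also have "\<dots> \<le> (\<Sum>j<k. xs ! j)"
    proof (rule sum_mono)
      fix j assume "j \<in> {..<k}"
      hence j: "j < k" by simp
      have "t * (1 - c j) \<le> xs ! j * (1 - c j)" using ge[OF j] c01[of j] j kN by (intro mult_right_mono) auto
      thus "xs ! j * c j + t * (1 - c j) \<le> xs ! j" by (simp add: algebra_simps)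
    qed
    also have "\<dots> = sum_list (take k xs)" using st kN by simp
    finally show ?thesis using t0 by (simp add: mult_left_mono)
  qed
qed


lemma triple_index: assumes X: "X \<in> carrier_mat N N" and Y: "Y \<in> carrier_mat N N" and i: "i < N" and j: "j < N"
  shows "(adj X * Y * X) $$ (i,j) = (\<Sum>a<N. \<Sum>b<N. cnj (X $$ (a,i)) * Y $$ (a,b) * X $$ (b,j))"
proof -
  have "(adj X * Y * X) $$ (i,j) = (\<Sum>b<N. (adj X * Y) $$ (i,b) * X $$ (b,j))"
    using X Y i j by (simp add: index_mult_mat scalar_prod_def atLeast0LessThan)
  also have "\<dots> = (\<Sum>b<N. (\<Sum>a<N. cnj (X $$ (a,i)) * Y $$ (a,b)) * X $$ (b,j))"
    using X Y i j by (intro sum.cong refl) (simp add: index_mult_mat scalar_prod_def atLeast0LessThan)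
  also have "\<dots> = (\<Sum>b<N. \<Sum>a<N. cnj (X $$ (a,i)) * Y $$ (a,b) * X $$ (b,j))"
    by (simp add: sum_distrib_right)
  also have "\<dots> = (\<Sum>a<N. \<Sum>b<N. cnj (X $$ (a,i)) * Y $$ (a,b) * X $$ (b,j))"
    by (rule sum.swap)
  finally show ?thesis .
qed

lemma cnj_mult_self: "cnj z * z = complex_of_real ((cmod z)\<^sup>2)"
  by (subst complex_norm_square) (rule mult.commute)

lemma unitary_col_norm: assumes W: "unitary W N" and i: "i < N"
  shows "(\<Sum>a<N. (cmod (W $$ (a,i)))\<^sup>2) = 1"
proof -
  have Wc: "W \<in> carrier_mat N N" using W unfolding unitary_def by auto
  have "(adj W * W) $$ (i,i) = 1" using W i unfolding unitary_def by simp
  moreover have "(adj W * W) $$ (i,i) = (\<Sum>a<N. cnj (W $$ (a,i)) * W $$ (a,i))"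
    using Wc i by (simp add: index_mult_mat scalar_prod_def atLeast0LessThan)
  ultimately have "(\<Sum>a<N. complex_of_real ((cmod (W $$ (a,i)))\<^sup>2)) = 1"
    by (simp add: cnj_mult_self)
  thus ?thesis by (metis of_real_eq_1_iff of_real_sum)
qed

lemma unitary_row_norm: assumes W: "unitary W N" and a: "a < N"
  shows "(\<Sum>i<N. (cmod (W $$ (a,i)))\<^sup>2) = 1"
proof -
  have Wc: "W \<in> carrier_mat N N" using W unfolding unitary_def by auto
  have "(W * adj W) $$ (a,a) = 1" using unitary_right[OF W] a by simp
  moreover have "(W * adj W) $$ (a,a) = (\<Sum>i<N. cnj (W $$ (a,i)) * W $$ (a,i))"
    using Wc a by (simp add: index_mult_mat scalar_prod_def atLeast0LessThan mult.commute)
  ultimately have "(\<Sum>i<N. complex_of_real ((cmod (W $$ (a,i)))\<^sup>2)) = 1"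
    by (simp add: cnj_mult_self)
  thus ?thesis by (metis of_real_eq_1_iff of_real_sum)
qed

lemma ky_fan_herm:
  assumes M: "M \<in> carrier_mat N N" and h: "adj M = M" and U: "unitary U N" and les: "length es = N"
   and im: "\<forall>i<N. Im (es!i) = 0" and srt: "sorted_wrt (\<ge>) (map cmod es)" and D: "adj U * M * U = diag_c es"
  shows "ky_fan_mat k M = sum_list (take k (map cmod es))"
  unfolding ky_fan_mat_def sv_decomp[OF assms] ..

lemma diag_bound:
  assumes M: "M \<in> carrier_mat N N" and h: "adj M = M" and V: "unitary V N"
    and kk: "k' \<le> k" "k' \<le> N" and eps: "\<And>i. \<bar>\<epsilon> i\<bar> \<le> (1::real)"
  shows "(\<Sum>i<k'. \<epsilon> i * Re ((adj V * M * V) $$ (i,i))) \<le> ky_fan_mat k M"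
proof -
  obtain U es where U: "unitary U N" and les: "length es = N" and im: "\<forall>i<N. Im (es ! i) = 0"
    and srt: "sorted_wrt (\<ge>) (map cmod es)" and D: "adj U * M * U = diag_c es"
    using herm_decomp[OF M h] by blast
  have Uc: "U \<in> carrier_mat N N" and Vc: "V \<in> carrier_mat N N" using U V unfolding unitary_def by auto
  define W where "W = adj U * V"
  have W: "unitary W N" unfolding W_def by (rule unitary_mult[OF unitary_adj[OF U] V])
  have Wc: "W \<in> carrier_mat N N" using W unfolding unitary_def by auto
  have Dc: "diag_c es \<in> carrier_mat N N" using les by auto
  have MU: "M = U * diag_c es * adj U" using conj_back[OF U M] D by simp
  have adjW: "adj W = adj V * U" unfolding W_def using Uc Vc by (simp add: adj_mult[of _ N N _ N])
  have VMV: "adj V * M * V = adj W * diag_c es * W"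
  proof -
    have gen: "a * (b * c * d) * e = (a * b) * c * (d * e)"
      if "a \<in> carrier_mat N N" "b \<in> carrier_mat N N" "c \<in> carrier_mat N N"
       "d \<in> carrier_mat N N" "e \<in> carrier_mat N N" for a b c d e :: "complex mat"
      using that by (simp add: assoc_mult_mat[of _ N N _ N _ N])
    show ?thesis unfolding adjW unfolding W_def MU
      by (rule gen) (use Uc Vc Dc in auto)
  qed
  have entry: "Re ((adj V * M * V) $$ (i,i)) = (\<Sum>a<N. Re (es ! a) * (cmod (W $$ (a,i)))\<^sup>2)"
    if i: "i < N" for i
  proof -
    have "(adj V * M * V) $$ (i,i) = (\<Sum>a<N. \<Sum>b<N. cnj (W $$ (a,i)) * diag_c es $$ (a,b) * W $$ (b,i))"
      unfolding VMV by (rule triple_index[OF Wc Dc i i])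
    also have "\<dots> = (\<Sum>a<N. cnj (W $$ (a,i)) * es ! a * W $$ (a,i))"
    proof (rule sum.cong[OF refl])
      fix a assume a: "a \<in> {..<N}"
      have "(\<Sum>b<N. cnj (W $$ (a,i)) * diag_c es $$ (a,b) * W $$ (b,i))
          = (\<Sum>b<N. if b = a then cnj (W $$ (a,i)) * es ! a * W $$ (a,i) else 0)"
        using a les by (intro sum.cong refl) auto
      also have "\<dots> = cnj (W $$ (a,i)) * es ! a * W $$ (a,i)" using a by simp
      finally show "(\<Sum>b<N. cnj (W $$ (a,i)) * diag_c es $$ (a,b) * W $$ (b,i)) = cnj (W $$ (a,i)) * es ! a * W $$ (a,i)" .
    qed
    also have "\<dots> = (\<Sum>a<N. es ! a * complex_of_real ((cmod (W $$ (a,i)))\<^sup>2))"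
    proof -
      have r: "cnj w * e * w = e * (cnj w * w)" for w e :: complex by (simp add: algebra_simps)
      show ?thesis by (simp only: r cnj_mult_self)
    qed
    finally show ?thesis by (simp add: Re_sum)
  qed
  define c where "c a = (\<Sum>i<k'. (cmod (W $$ (a,i)))\<^sup>2)" for a
  have "(\<Sum>i<k'. \<epsilon> i * Re ((adj V * M * V) $$ (i,i))) = (\<Sum>i<k'. \<Sum>a<N. \<epsilon> i * Re (es ! a) * (cmod (W $$ (a,i)))\<^sup>2)"
    using kk by (intro sum.cong refl) (simp add: entry sum_distrib_left algebra_simps)
  also have "\<dots> \<le> (\<Sum>i<k'. \<Sum>a<N. cmod (es ! a) * (cmod (W $$ (a,i)))\<^sup>2)"
  proof (intro sum_mono)
    fix i a
    have "\<epsilon> i * Re (es ! a) \<le> cmod (es ! a)"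
    proof -
      have "\<epsilon> i * Re (es ! a) \<le> \<bar>\<epsilon> i * Re (es ! a)\<bar>" by simp
      also have "\<dots> = \<bar>\<epsilon> i\<bar> * \<bar>Re (es ! a)\<bar>" by (simp add: abs_mult)
      also have "\<dots> \<le> 1 * cmod (es ! a)" by (intro mult_mono eps abs_Re_le_cmod) auto
      finally show ?thesis by simp
    qed
    thus "\<epsilon> i * Re (es ! a) * (cmod (W $$ (a,i)))\<^sup>2 \<le> cmod (es ! a) * (cmod (W $$ (a,i)))\<^sup>2"
      by (intro mult_right_mono) auto
  qed
  also have "\<dots> = (\<Sum>a<N. cmod (es ! a) * c a)"
    unfolding c_def by (subst sum.swap) (simp add: sum_distrib_left)
  also have "\<dots> = (\<Sum>a<length (map cmod es). map cmod es ! a * c a)" using les by simp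
  also have "\<dots> \<le> sum_list (take k (map cmod es))"
  proof (rule topk_bound)
    show "sorted_wrt (\<ge>) (map cmod es)" by fact
    show "\<forall>x\<in>set (map cmod es). x \<ge> 0" by auto
    fix j assume j: "j < length (map cmod es)"
    hence j': "j < N" using les by simp
    have "c j \<le> (\<Sum>i<N. (cmod (W $$ (j,i)))\<^sup>2)"
      unfolding c_def using kk by (intro sum_mono2) auto
    thus "0 \<le> c j \<and> c j \<le> 1" using unitary_row_norm[OF W j'] unfolding c_def by (auto intro: sum_nonneg)
  next
    have "(\<Sum>j<length (map cmod es). c j) = (\<Sum>i<k'. \<Sum>a<N. (cmod (W $$ (a,i)))\<^sup>2)"
      unfolding c_def using les by (subst sum.swap) simp
    also have "\<dots> = (\<Sum>i<k'. 1)" using kk by (intro sum.cong refl unitary_col_norm[OF W]) auto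
    also have "\<dots> \<le> real k" using kk by simp
    finally show "(\<Sum>j<length (map cmod es). c j) \<le> real k" .
  qed
  also have "\<dots> = ky_fan_mat k M" using ky_fan_herm[OF M h U les im srt D] by simp
  finally show ?thesis .
qed


lemma mi_decode_idx: "r < prod_list dims \<Longrightarrow> mi_decode dims r \<in> multi_idx dims"
proof (induct dims arbitrary: r)
  case Nil thus ?case by (simp add: multi_idx_def)
next
  case (Cons d ds)
  have "r < d * prod_list ds" using Cons(2) by simp
  hence "prod_list ds \<noteq> 0" by (metis mult_0_right not_less_zero)
  hence P: "prod_list ds > 0" by (rule neq0_conv[THEN iffD1])
  have h: "r div prod_list ds < d" using Cons(2) P by (simp add: div_less_iff_less_mult mult.commute)
  have m: "r mod prod_list ds < prod_list ds" using P by simp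
  have IH: "mi_decode ds (r mod prod_list ds) \<in> multi_idx ds" using Cons(1)[OF m] .
  show ?case using h IH unfolding multi_idx_def by (auto simp: nth_Cons split: nat.splits)
qed

lemma unfold_carrier: "unfold_tensor dims T \<in> carrier_mat (prod_list dims) (prod_list dims)"
  unfolding unfold_tensor_def by simp

lemma unfold_index: "a < prod_list dims \<Longrightarrow> b < prod_list dims \<Longrightarrow>
   unfold_tensor dims T $$ (a,b) = T (mi_decode dims a) (mi_decode dims b)"
  unfolding unfold_tensor_def by simp

lemma unfold_herm: assumes "herm_tensor dims T" shows "adj (unfold_tensor dims T) = unfold_tensor dims T"
proof (rule eq_matI)
  fix i j assume i: "i < dim_row (unfold_tensor dims T)" and j: "j < dim_col (unfold_tensor dims T)"
  hence i': "i < prod_list dims" and j': "j < prod_list dims" using unfold_carrier[of dims T] by auto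
  have "T (mi_decode dims i) (mi_decode dims j) = cnj (T (mi_decode dims j) (mi_decode dims i))"
    using assms mi_decode_idx[OF i'] mi_decode_idx[OF j'] unfolding herm_tensor_def by blast
  thus "adj (unfold_tensor dims T) $$ (i, j) = unfold_tensor dims T $$ (i, j)"
    using i' j' unfold_carrier[of dims T] by (simp add: unfold_index)
qed (auto simp: unfold_tensor_def)

lemma chaos_herm:
  assumes hA: "\<And>is. length is \<in> {1..m} \<Longrightarrow> set is \<subseteq> {1..n} \<Longrightarrow> herm_tensor dims (A is)"
    and hB: "herm_tensor dims B"
  shows "herm_tensor dims (chaos n m B A \<beta>)"
  unfolding herm_tensor_def
proof (intro ballI)
  fix xs ys assume xs: "xs \<in> multi_idx dims" and ys: "ys \<in> multi_idx dims"
  have "(\<Sum>j\<in>{1..m}. \<Sum>is\<in>distinct_tuples n j. complex_of_real (prod_list (map \<beta> is)) * A is xs ys)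
     = (\<Sum>j\<in>{1..m}. \<Sum>is\<in>distinct_tuples n j. cnj (complex_of_real (prod_list (map \<beta> is)) * A is ys xs))"
  proof (intro sum.cong refl)
    fix j ix assume j: "j \<in> {1..m}" and ix: "ix \<in> distinct_tuples n j"
    have "herm_tensor dims (A ix)" using hA j ix unfolding distinct_tuples_def by auto
    hence "A ix xs ys = cnj (A ix ys xs)" using xs ys unfolding herm_tensor_def by blast
    thus "complex_of_real (prod_list (map \<beta> ix)) * A ix xs ys = cnj (complex_of_real (prod_list (map \<beta> ix)) * A ix ys xs)"
      by simp
  qed
  moreover have "B xs ys = cnj (B ys xs)" using hB xs ys unfolding herm_tensor_def by blast
  ultimately show "chaos n m B A \<beta> xs ys = cnj (chaos n m B A \<beta> ys xs)"
    unfolding chaos_def by (simp add: cnj_sum)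
qed

lemma swap3: "(\<Sum>i\<in>I. \<Sum>j\<in>J. \<Sum>x\<in>X j. h i j x) = (\<Sum>j\<in>J. \<Sum>x\<in>X j. \<Sum>i\<in>I. (h i j x :: 'a :: comm_monoid_add))"
proof -
  have "(\<Sum>i\<in>I. \<Sum>j\<in>J. \<Sum>x\<in>X j. h i j x) = (\<Sum>j\<in>J. \<Sum>i\<in>I. \<Sum>x\<in>X j. h i j x)" by (rule sum.swap)
  also have "\<dots> = (\<Sum>j\<in>J. \<Sum>x\<in>X j. \<Sum>i\<in>I. h i j x)" by (intro sum.cong refl) (rule sum.swap)
  finally show ?thesis .
qed

lemma swap4: "(\<Sum>a\<in>A. \<Sum>b\<in>B. \<Sum>j\<in>J. \<Sum>x\<in>X j. h a b j x) = (\<Sum>j\<in>J. \<Sum>x\<in>X j. \<Sum>a\<in>A. \<Sum>b\<in>B. (h a b j x :: 'a :: comm_monoid_add))"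
proof -
  have "(\<Sum>a\<in>A. \<Sum>b\<in>B. \<Sum>j\<in>J. \<Sum>x\<in>X j. h a b j x) = (\<Sum>a\<in>A. \<Sum>j\<in>J. \<Sum>x\<in>X j. \<Sum>b\<in>B. h a b j x)"
    by (intro sum.cong refl) (rule swap3)
  also have "\<dots> = (\<Sum>j\<in>J. \<Sum>x\<in>X j. \<Sum>a\<in>A. \<Sum>b\<in>B. h a b j x)" by (rule swap3)
  finally show ?thesis .
qed

lemma sign_sum_zero:
  assumes ix: "ix \<noteq> []" "set ix \<subseteq> {1..n}" "distinct ix"
  shows "(\<Sum>\<beta>\<in>set_pmf (bernoulli_signs n). prod_list (map \<beta> ix)) = 0"
proof -
  let ?S = "set_pmf (bernoulli_signs n)"
  obtain i0 rest where is0: "ix = i0 # rest" using ix(1) by (cases ix) auto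
  have i0: "i0 \<in> {1..n}" and nr: "i0 \<notin> set rest" using ix is0 by auto
  have S: "?S = PiE_dflt {1..n} 0 (\<lambda>_. {-1, 1})"
    unfolding bernoulli_signs_def by (subst set_Pi_pmf) (auto simp: o_def)
  define h where "h \<beta> = \<beta>(i0 := - \<beta> i0)" for \<beta> :: "nat \<Rightarrow> real"
  have hS: "h \<beta> \<in> ?S" if "\<beta> \<in> ?S" for \<beta>
    using that i0 unfolding S PiE_dflt_def h_def by auto
  have hh: "h (h \<beta>) = \<beta>" for \<beta> unfolding h_def by auto
  have neg: "prod_list (map (h \<beta>) ix) = - prod_list (map \<beta> ix)" for \<beta>
  proof -
    have m: "map (h \<beta>) rest = map \<beta> rest" using nr unfolding h_def by (intro map_cong) auto
    show ?thesis unfolding is0 list.map prod_list.Cons m by (simp add: h_def)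
  qed
  have "(\<Sum>\<beta>\<in>?S. prod_list (map \<beta> ix)) = (\<Sum>\<beta>\<in>?S. - prod_list (map \<beta> ix))"
    by (rule sum.reindex_bij_witness[of _ h h]) (auto simp: hh hS neg)
  thus ?thesis by (simp add: sum_negf)
qed


lemma set_bern: "set_pmf (bernoulli_signs n) = PiE_dflt {1..n} 0 (\<lambda>_. {-1, 1})"
  unfolding bernoulli_signs_def by (subst set_Pi_pmf) (auto simp: o_def)

lemma pmf_bern: assumes "\<beta> \<in> set_pmf (bernoulli_signs n)"
  shows "pmf (bernoulli_signs n) \<beta> = (1/2)^n"
proof -
  have b: "\<forall>x. x \<notin> {1..n} \<longrightarrow> \<beta> x = 0" "\<forall>x\<in>{1..n}. \<beta> x \<in> {-1,1}"
    using assms unfolding set_bern PiE_dflt_def by auto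
  have "pmf (bernoulli_signs n) \<beta> = (\<Prod>x\<in>{1..n}. pmf (pmf_of_set {-1, 1::real}) (\<beta> x))"
    unfolding bernoulli_signs_def using b(1) by (subst pmf_Pi) auto
  also have "\<dots> = (\<Prod>x\<in>{1..n}. 1/2)"
    using b(2) by (intro prod.cong refl) (auto simp: pmf_of_set)
  finally show ?thesis by simp
qed

theorem lemma6:
  fixes dims :: "nat list" and n m k :: nat and A :: "nat list \<Rightarrow> ctensor"
  assumes "\<And>is. length is \<in> {1..m} \<Longrightarrow> set is \<subseteq> {1..n} \<Longrightarrow> herm_tensor dims (A is)"
  shows "\<exists>C>0. \<forall>B. herm_tensor dims B \<longrightarrow>
           measure_pmf.prob (bernoulli_signs n)
             {\<beta>. ky_fan k dims (chaos n m B A \<beta>) \<ge> ky_fan k dims B} \<ge> C"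
proof -
  note hA = assms
  define C :: real where "C = (1/2)^n"
  have C0: "C > 0" unfolding C_def by simp
  have "measure_pmf.prob (bernoulli_signs n)
             {\<beta>. ky_fan k dims (chaos n m B A \<beta>) \<ge> ky_fan k dims B} \<ge> C"
    if hB: "herm_tensor dims B" for B
  proof -
    define N where "N = prod_list dims"
    define MB where "MB = unfold_tensor dims B"
    have MBc: "MB \<in> carrier_mat N N" unfolding MB_def N_def by (rule unfold_carrier)
    have hMB: "adj MB = MB" unfolding MB_def by (rule unfold_herm[OF hB])
    obtain U es where U: "unitary U N" and les: "length es = N" and im: "\<forall>i<N. Im (es ! i) = 0"
      and srt: "sorted_wrt (\<ge>) (map cmod es)" and D: "adj U * MB * U = diag_c es"
      using herm_decomp[OF MBc hMB] by blast
    have Uc: "U \<in> carrier_mat N N" using U unfolding unitary_def by auto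
    define k' where "k' = min k N"
    define \<epsilon> where "\<epsilon> i = (if Re (es ! i) \<ge> 0 then 1 else -1 :: real)" for i
    have eps: "\<bar>\<epsilon> i\<bar> \<le> 1" for i unfolding \<epsilon>_def by auto
    define inner where "inner T i = (\<Sum>a<N. \<Sum>b<N. cnj (U $$ (a,i)) * T (mi_decode dims a) (mi_decode dims b) * U $$ (b,i))"
      for T :: ctensor and i
    define L where "L T = (\<Sum>i<k'. \<epsilon> i * Re (inner T i))" for T
    have Lg: "L T = (\<Sum>i<k'. \<epsilon> i * Re ((adj U * unfold_tensor dims T * U) $$ (i,i)))" for T
      unfolding L_def
    proof (intro sum.cong refl)
      fix i assume "i \<in> {..<k'}"
      hence i: "i < N" unfolding k'_def by simp
      have "(adj U * unfold_tensor dims T * U) $$ (i,i) = inner T i"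
        unfolding triple_index[OF Uc unfold_carrier[of dims T, folded N_def] i i] inner_def
        by (intro sum.cong refl) (simp add: unfold_index N_def)
      thus "\<epsilon> i * Re (inner T i) = \<epsilon> i * Re ((adj U * unfold_tensor dims T * U) $$ (i,i))" by simp
    qed
    have LB: "L B = ky_fan k dims B"
    proof -
      have "L B = (\<Sum>i<k'. cmod (es ! i))"
        unfolding Lg MB_def[symmetric] D
      proof (intro sum.cong refl)
        fix i assume "i \<in> {..<k'}"
        hence i: "i < N" unfolding k'_def by simp
        have "\<epsilon> i * Re (es ! i) = cmod (es ! i)" using im i unfolding \<epsilon>_def by (simp add: cmod_eq_Re)
        thus "\<epsilon> i * Re (diag_c es $$ (i, i)) = cmod (es ! i)" using i les by simp
      qed
      also have "\<dots> = sum_list (take k (map cmod es))"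
        using les unfolding k'_def by (simp add: sum_list_sum_nth atLeast0LessThan min.commute)
      also have "\<dots> = ky_fan k dims B"
        unfolding ky_fan_def MB_def[symmetric] using ky_fan_herm[OF MBc hMB U les im srt D] by simp
      finally show ?thesis .
    qed
    have Lle: "L T \<le> ky_fan k dims T" if hT: "herm_tensor dims T" for T
      unfolding Lg ky_fan_def
      by (rule diag_bound[OF unfold_carrier[of dims T, folded N_def] unfold_herm[OF hT] U _ _ eps])
         (auto simp: k'_def)
    have inner_chaos: "inner (chaos n m B A \<beta>) i = inner B i +
       (\<Sum>j\<in>{1..m}. \<Sum>ix\<in>distinct_tuples n j. complex_of_real (prod_list (map \<beta> ix)) * inner (A ix) i)" for \<beta> i
    proof -
      let ?c = "\<lambda>ix. complex_of_real (prod_list (map \<beta> ix))"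
      let ?d = "mi_decode dims"
      have pw: "cnj (U $$ (a,i)) * chaos n m B A \<beta> (?d a) (?d b) * U $$ (b,i) =
          cnj (U $$ (a,i)) * B (?d a) (?d b) * U $$ (b,i) +
          (\<Sum>j\<in>{1..m}. \<Sum>ix\<in>distinct_tuples n j. ?c ix * (cnj (U $$ (a,i)) * A ix (?d a) (?d b) * U $$ (b,i)))"
        for a b
        unfolding chaos_def by (simp add: distrib_left distrib_right sum_distrib_left sum_distrib_right mult_ac)
      have "inner (chaos n m B A \<beta>) i = inner B i +
          (\<Sum>a<N. \<Sum>b<N. \<Sum>j\<in>{1..m}. \<Sum>ix\<in>distinct_tuples n j. ?c ix * (cnj (U $$ (a,i)) * A ix (?d a) (?d b) * U $$ (b,i)))"
        unfolding inner_def pw by (simp add: sum.distrib)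
      also have "(\<Sum>a<N. \<Sum>b<N. \<Sum>j\<in>{1..m}. \<Sum>ix\<in>distinct_tuples n j. ?c ix * (cnj (U $$ (a,i)) * A ix (?d a) (?d b) * U $$ (b,i)))
         = (\<Sum>j\<in>{1..m}. \<Sum>ix\<in>distinct_tuples n j. \<Sum>a<N. \<Sum>b<N. ?c ix * (cnj (U $$ (a,i)) * A ix (?d a) (?d b) * U $$ (b,i)))"
        by (rule swap4)
      also have "\<dots> = (\<Sum>j\<in>{1..m}. \<Sum>ix\<in>distinct_tuples n j. ?c ix * inner (A ix) i)"
        unfolding inner_def by (simp add: sum_distrib_left)
      finally show ?thesis .
    qed
    have Lchaos: "L (chaos n m B A \<beta>) = L B +
       (\<Sum>j\<in>{1..m}. \<Sum>ix\<in>distinct_tuples n j. prod_list (map \<beta> ix) * L (A ix))" for \<beta>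
    proof -
      have per: "\<epsilon> i * Re (inner (chaos n m B A \<beta>) i) = \<epsilon> i * Re (inner B i) +
         (\<Sum>j\<in>{1..m}. \<Sum>ix\<in>distinct_tuples n j. prod_list (map \<beta> ix) * (\<epsilon> i * Re (inner (A ix) i)))" for i
      proof -
        have re: "Re (complex_of_real r * z) = r * Re z" for r z by simp
        have "Re (inner (chaos n m B A \<beta>) i) = Re (inner B i) +
           (\<Sum>j\<in>{1..m}. \<Sum>ix\<in>distinct_tuples n j. prod_list (map \<beta> ix) * Re (inner (A ix) i))"
          unfolding inner_chaos by (simp only: plus_complex.sel Re_sum re)
        thus ?thesis by (simp only: distrib_left sum_distrib_left mult.left_commute)
      qed
      have "L (chaos n m B A \<beta>) = L B +
         (\<Sum>i<k'. \<Sum>j\<in>{1..m}. \<Sum>ix\<in>distinct_tuples n j. prod_list (map \<beta> ix) * (\<epsilon> i * Re (inner (A ix) i)))"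
        unfolding L_def per by (simp only: sum.distrib)
      also have "(\<Sum>i<k'. \<Sum>j\<in>{1..m}. \<Sum>ix\<in>distinct_tuples n j. prod_list (map \<beta> ix) * (\<epsilon> i * Re (inner (A ix) i)))
         = (\<Sum>j\<in>{1..m}. \<Sum>ix\<in>distinct_tuples n j. \<Sum>i<k'. prod_list (map \<beta> ix) * (\<epsilon> i * Re (inner (A ix) i)))"
        by (rule swap3)
      also have "\<dots> = (\<Sum>j\<in>{1..m}. \<Sum>ix\<in>distinct_tuples n j. prod_list (map \<beta> ix) * L (A ix))"
        unfolding L_def by (simp add: sum_distrib_left)
      finally show ?thesis .
    qed
    define S where "S = set_pmf (bernoulli_signs n)"
    have finS: "finite S" unfolding S_def set_bern by (rule finite_PiE_dflt) auto
    have neS: "S \<noteq> {}" unfolding S_def by (rule set_pmf_not_empty)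
    have sumL: "(\<Sum>\<beta>\<in>S. L (chaos n m B A \<beta>)) = (\<Sum>\<beta>\<in>S. L B)"
    proof -
      have "(\<Sum>\<beta>\<in>S. L (chaos n m B A \<beta>)) = (\<Sum>\<beta>\<in>S. L B) +
          (\<Sum>\<beta>\<in>S. \<Sum>j\<in>{1..m}. \<Sum>ix\<in>distinct_tuples n j. prod_list (map \<beta> ix) * L (A ix))"
        unfolding Lchaos by (simp add: sum.distrib)
      also have "(\<Sum>\<beta>\<in>S. \<Sum>j\<in>{1..m}. \<Sum>ix\<in>distinct_tuples n j. prod_list (map \<beta> ix) * L (A ix))
          = (\<Sum>j\<in>{1..m}. \<Sum>ix\<in>distinct_tuples n j. \<Sum>\<beta>\<in>S. prod_list (map \<beta> ix) * L (A ix))"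
        by (rule swap3)
      also have "\<dots> = 0"
      proof (rule sum.neutral, intro ballI, rule sum.neutral, intro ballI)
        fix j ix assume j: "j \<in> {1..m}" and ix: "ix \<in> distinct_tuples n j"
        have "ix \<noteq> []" "set ix \<subseteq> {1..n}" "distinct ix" using j ix unfolding distinct_tuples_def by auto
        from sign_sum_zero[OF this]
        show "(\<Sum>\<beta>\<in>S. prod_list (map \<beta> ix) * L (A ix)) = 0"
          unfolding S_def by (simp add: sum_distrib_right[symmetric])
      qed
      finally show ?thesis by simp
    qed
    obtain \<beta> where b: "\<beta> \<in> S" and bL: "L (chaos n m B A \<beta>) \<ge> L B"
    proof -
      { assume "\<forall>\<beta>\<in>S. L (chaos n m B A \<beta>) < L B"
        hence "(\<Sum>\<beta>\<in>S. L (chaos n m B A \<beta>)) < (\<Sum>\<beta>\<in>S. L B)"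
          using finS neS by (intro sum_strict_mono) auto
        hence False using sumL by simp }
      thus ?thesis using that by force
    qed
    have hc: "herm_tensor dims (chaos n m B A \<beta>)" by (rule chaos_herm) (use hA hB in auto)
    have "ky_fan k dims B \<le> ky_fan k dims (chaos n m B A \<beta>)"
      using LB bL Lle[OF hc] by simp
    hence mem: "\<beta> \<in> {\<beta>. ky_fan k dims (chaos n m B A \<beta>) \<ge> ky_fan k dims B}" by simp
    have "C = pmf (bernoulli_signs n) \<beta>" using pmf_bern b unfolding S_def C_def by simp
    also have "\<dots> = measure_pmf.prob (bernoulli_signs n) {\<beta>}" by (simp add: measure_pmf_single)
    also have "\<dots> \<le> measure_pmf.prob (bernoulli_signs n) {\<beta>. ky_fan k dims (chaos n m B A \<beta>) \<ge> ky_fan k dims B}"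
      using mem by (intro measure_pmf.finite_measure_mono) auto
    finally show ?thesis .
  qed
  thus ?thesis using C0 by blast
qed

end
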